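(* Let $n>m\ge 0$ be integers. Let $(\mathbf{p})(t)$ be a disk rational Bézier curve of degree $n$ with control disks $(\mathbf{p}_i)=(x_i,y_i)_{r_i}$ (centers $\mathbf{p}_i\in\mathbb{R}^2$, radii $r_i\ge 0$) and weights $\omega_i>0$, $i=0,\dots,n$, and let $(\check{\mathbf{p}})(t)$ be a disk rational Bézier curve of degree $m$ with control disks $(\check{\mathbf{p}}_j)=(\check x_j,\check y_j)_{\check r_j}$ and weights $\check\omega_j>0$, $j=0,\dots,m$. Then $(\mathbf{p})(t)=(\check{\mathbf{p}})(t)$ for all $t\in[0,1]$ (i.e. the center curves coincide and the radius functions coincide on $[0,1]$) if and only if $$\sum_{j=\max(0,i-n)}^{\min(m,i)}\frac{\binom{m}{j}\binom{n}{i-j}}{\binom{m+n}{i}}\check\omega_j\,\omega_{i-j}\,\mathbf{p}_{i-j}=\sum_{j=\max(0,i-n)}^{\min(m,i)}\frac{\binom{m}{j}\binom{n}{i-j}}{\binom{m+n}{i}}\check\omega_j\,\omega_{i-j}\,\check{\mathbf{p}}_{j},\qquad i=0,1,\dots,n+m,$$ and $$r_k=\sum_{j=\max(0,k-n+m)}^{\min(m,k)}\check r_j\binom{m}{j}\frac{\binom{n-m}{k-j}}{\binom{n}{k}},\qquad k=0,1,\dots,n.$$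
   Context: Let $B_i^n(t)=\binom{n}{i}t^i(1-t)^{n-i}$ denote the Bernstein polynomials. A disk rational Bézier curve of degree $n$ with control disks $(\mathbf{p}_i)$ having centers $\mathbf{p}_i\in\mathbb{R}^2$ and radii $r_i\ge0$, and weights $\omega_i>0$, $i=0,\dots,n$, is the family of disks $(\mathbf{p})(t)=[\mathbf{p}(t);r(t)]$, $0\le t\le 1$, with center curve $\mathbf{p}(t)=\dfrac{\sum_{i=0}^n \mathbf{p}_i\omega_iB_i^n(t)}{\sum_{i=0}^n\omega_iB_i^n(t)}$ and (polynomial, non-rational) radius function $r(t)=\sum_{i=0}^n r_iB_i^n(t)$; i.e. $(\mathbf{p})(t)$ is the closed disk of center $\mathbf{p}(t)$ and radius $r(t)$. *)

theory Defs
  imports "HOL-Analysis.Analysis"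
begin

definition rbezier_center :: "nat \<Rightarrow> (nat \<Rightarrow> real) \<Rightarrow> (nat \<Rightarrow> real^2) \<Rightarrow> real \<Rightarrow> real^2" where
  "rbezier_center n w p t =
     (\<Sum>i\<le>n. (w i * Bernstein n i t) *\<^sub>R p i) /\<^sub>R (\<Sum>i\<le>n. w i * Bernstein n i t)"

definition bezier_radius :: "nat \<Rightarrow> (nat \<Rightarrow> real) \<Rightarrow> real \<Rightarrow> real" where
  "bezier_radius n r t = (\<Sum>i\<le>n. r i * Bernstein n i t)"

definition disk_rbezier :: "nat \<Rightarrow> (nat \<Rightarrow> real) \<Rightarrow> (nat \<Rightarrow> real^2) \<Rightarrow> (nat \<Rightarrow> real) \<Rightarrow> real \<Rightarrow> (real^2) set" where
  "disk_rbezier n w p r t = cball (rbezier_center n w p t) (bezier_radius n r t)"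

end

theory Submission
  imports Defs
begin

lemma bern_s:
  fixes s :: real assumes "s \<ge> 0" "i \<le> N"
  shows "Bernstein N i (s/(1+s)) = real (N choose i) * s^i / (1+s)^N"
proof -
  have h: "1 - s/(1+s) = 1/(1+s)" using assms by (simp add: field_simps)
  have "(1+s)^N = (1+s)^i * (1+s)^(N-i)" using assms by (simp flip: power_add)
  then show ?thesis unfolding Bernstein_def h using assms
    by (simp add: power_divide field_simps)
qed

lemma bern_indep0:
  fixes c :: "nat \<Rightarrow> real"
  assumes "\<forall>t\<in>{0..1}. (\<Sum>i\<le>N. c i * Bernstein N i t) = 0"
  shows "\<forall>i\<le>N. c i = 0"
proof -
  define d where "d i = c i * real (N choose i)" for i
  have "{0::real..} \<subseteq> {z. (\<Sum>i\<le>N. d i * z^i) = 0}"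
  proof
    fix s :: real assume "s \<in> {0..}"
    then have s: "s \<ge> 0" by simp
    have t: "s/(1+s) \<in> {0..1}" using s by (simp add: field_simps)
    have "(\<Sum>i\<le>N. c i * Bernstein N i (s/(1+s))) = (\<Sum>i\<le>N. d i * s^i) / (1+s)^N"
      unfolding sum_divide_distrib by (rule sum.cong) (auto simp: bern_s s d_def)
    with assms t s show "s \<in> {z. (\<Sum>i\<le>N. d i * z^i) = 0}" by auto
  qed
  moreover have "infinite {0::real..}"
    by (rule infinite_Ici)
  ultimately have "infinite {z. (\<Sum>i\<le>N. d i * z^i) = 0}" using finite_subset by blast
  then have "\<forall>k\<le>N. d k = 0" using polyfun_finite_roots by blast
  then show ?thesis by (simp add: d_def)
qed

lemma bern_indep:
  fixes a b :: "nat \<Rightarrow> real"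
  shows "(\<forall>t\<in>{0..1}. (\<Sum>i\<le>N. a i * Bernstein N i t) = (\<Sum>i\<le>N. b i * Bernstein N i t))
     \<longleftrightarrow> (\<forall>i\<le>N. a i = b i)"
proof
  assume h: "\<forall>t\<in>{0..1}. (\<Sum>i\<le>N. a i * Bernstein N i t) = (\<Sum>i\<le>N. b i * Bernstein N i t)"
  have "\<forall>t\<in>{0..1}. (\<Sum>i\<le>N. (a i - b i) * Bernstein N i t) = 0"
    using h by (simp add: left_diff_distrib sum_subtractf)
  then show "\<forall>i\<le>N. a i = b i" using bern_indep0 by fastforce
qed simp

lemma bern_indep_vec:
  fixes a b :: "nat \<Rightarrow> real^2"
  shows "(\<forall>t\<in>{0..1}. (\<Sum>i\<le>N. Bernstein N i t *\<^sub>R a i) = (\<Sum>i\<le>N. Bernstein N i t *\<^sub>R b i))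
     \<longleftrightarrow> (\<forall>i\<le>N. a i = b i)"
proof
  assume h: "\<forall>t\<in>{0..1}. (\<Sum>i\<le>N. Bernstein N i t *\<^sub>R a i) = (\<Sum>i\<le>N. Bernstein N i t *\<^sub>R b i)"
  have comp: "(\<Sum>i\<le>N. Bernstein N i t *\<^sub>R c i) $ k = (\<Sum>i\<le>N. c i $ k * Bernstein N i t)"
    for c :: "nat \<Rightarrow> real^2" and t k
    unfolding sum_component vector_scaleR_component by (intro sum.cong refl) (simp add: real_scaleR_def mult.commute)
  have "\<forall>i\<le>N. a i $ k = b i $ k" for k
  proof -
    have "\<forall>t\<in>{0..1}. (\<Sum>i\<le>N. a i $ k * Bernstein N i t) = (\<Sum>i\<le>N. b i $ k * Bernstein N i t)"
    proof
      fix t :: real assume "t \<in> {0..1}"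
      then have "(\<Sum>i\<le>N. Bernstein N i t *\<^sub>R a i) = (\<Sum>i\<le>N. Bernstein N i t *\<^sub>R b i)"
        using h by blast
      then have "(\<Sum>i\<le>N. Bernstein N i t *\<^sub>R a i) $ k = (\<Sum>i\<le>N. Bernstein N i t *\<^sub>R b i) $ k"
        by (rule arg_cong)
      then show "(\<Sum>i\<le>N. a i $ k * Bernstein N i t) = (\<Sum>i\<le>N. b i $ k * Bernstein N i t)"
        unfolding comp .
    qed
    then show ?thesis by (rule bern_indep[THEN iffD1])
  qed
  then show "\<forall>i\<le>N. a i = b i" by (auto simp: vec_eq_iff)
next
  assume h2: "\<forall>i\<le>N. a i = b i"
  show "\<forall>t\<in>{0..1}. (\<Sum>i\<le>N. Bernstein N i t *\<^sub>R a i) = (\<Sum>i\<le>N. Bernstein N i t *\<^sub>R b i)"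
  proof (intro ballI sum.cong refl)
    fix t i assume "i \<in> {..N}"
    then show "Bernstein N i t *\<^sub>R a i = Bernstein N i t *\<^sub>R b i" using h2 by simp
  qed
qed

lemma bern_mult:
  assumes "j \<le> m" "l \<le> n"
  shows "Bernstein m j t * Bernstein n l t =
     real (m choose j) * real (n choose l) / real ((m+n) choose (j+l)) * Bernstein (m+n) (j+l) t"
proof -
  have pos: "real ((m+n) choose (j+l)) > 0" using assms by simp
  have e: "m + n - (j + l) = (m - j) + (n - l)" using assms by simp
  show ?thesis using pos unfolding Bernstein_def e
    by (simp add: power_add field_simps)
qed

lemma sum_reindex_conv:
  fixes f :: "nat \<Rightarrow> nat \<Rightarrow> 'a::comm_monoid_add"
  shows "(\<Sum>i\<le>n. \<Sum>j\<le>m. f i j) = (\<Sum>k\<le>n+m. \<Sum>j=k-n..min m k. f (k-j) j)"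
proof -
  have "(\<Sum>i\<le>n. \<Sum>j\<le>m. f i j) = (\<Sum>(i,j)\<in>{..n}\<times>{..m}. f i j)"
    by (simp add: sum.cartesian_product)
  also have "\<dots> = (\<Sum>(k,j)\<in>(SIGMA k:{..n+m}. {k-n..min m k}). f (k-j) j)"
    by (rule sum.reindex_bij_witness[where i="\<lambda>(k,j). (k-j,j)" and j="\<lambda>(i,j). (i+j,j)"]) auto
  also have "\<dots> = (\<Sum>k\<le>n+m. \<Sum>j=k-n..min m k. f (k-j) j)"
    by (simp add: sum.Sigma)
  finally show ?thesis .
qed


lemma denom_pos:
  assumes "\<forall>i\<le>n. w i > 0" "t \<in> {0..1}"
  shows "(\<Sum>i\<le>n. w i * Bernstein n i t) > 0"
proof -
  have nn: "\<forall>i\<in>{..n}. 0 \<le> w i * Bernstein n i t"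
  proof
    fix i assume "i \<in> {..n}"
    then have "0 \<le> w i" using assms(1) by (simp add: order_less_imp_le)
    moreover have "0 \<le> Bernstein n i t" using assms(2) by (simp add: Bernstein_nonneg)
    ultimately show "0 \<le> w i * Bernstein n i t" by simp
  qed
  show ?thesis
  proof (cases "t = 1")
    case True
    have "0 < w n * Bernstein n n t" using assms True by (simp add: Bernstein_def)
    then show ?thesis using nn by (intro sum_pos2[of "{..n}" n]) auto
  next
    case False
    then have "t < 1" using assms by auto
    then have "0 < w 0 * Bernstein n 0 t" using assms by (simp add: Bernstein_def)
    then show ?thesis using nn by (intro sum_pos2[of "{..n}" 0]) auto
  qed
qed

lemma radius_nonneg:
  assumes "\<forall>i\<le>n. r i \<ge> 0" "t \<in> {0..1}"
  shows "bezier_radius n r t \<ge> 0"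
  unfolding bezier_radius_def using assms by (auto intro!: sum_nonneg mult_nonneg_nonneg Bernstein_nonneg)

lemma divR_eq:
  fixes x y :: "'a::real_vector"
  assumes "a \<noteq> 0" "b \<noteq> 0"
  shows "x /\<^sub>R a = y /\<^sub>R b \<longleftrightarrow> b *\<^sub>R x = a *\<^sub>R y"
proof -
  have ab: "a * b \<noteq> 0" using assms by simp
  have e1: "(a*b) *\<^sub>R (x /\<^sub>R a) = b *\<^sub>R x"
  proof -
    have "(a*b) *\<^sub>R (x /\<^sub>R a) = (a*b*inverse a) *\<^sub>R x" by simp
    also have "a*b*inverse a = b" using assms by (simp add: field_simps)
    finally show ?thesis .
  qed
  have e2: "(a*b) *\<^sub>R (y /\<^sub>R b) = a *\<^sub>R y"
  proof -
    have "(a*b) *\<^sub>R (y /\<^sub>R b) = (a*b*inverse b) *\<^sub>R y" by simp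
    also have "a*b*inverse b = a" using assms by (simp add: field_simps)
    finally show ?thesis .
  qed
  show ?thesis by (metis ab e1 e2 scaleR_cancel_left)
qed

lemma kj: "j \<in> {a..min m k} \<Longrightarrow> k - j + j = (k::nat)" by auto

lemma term_eq:
  assumes "i \<le> n" "j \<le> m"
  shows "(wc j * Bernstein m j t) * (w i * Bernstein n i t) =
     Bernstein (m+n) (i+j) t * (real (m choose j) * real (n choose i) / real ((m + n) choose (i+j)) * wc j * w i)"
  using bern_mult[OF assms(2) assms(1), of t] by (simp add: add.commute mult_ac)

lemma cross:
  fixes p pc :: "nat \<Rightarrow> real^2"
  shows "(\<Sum>j\<le>m. wc j * Bernstein m j t) *\<^sub>R (\<Sum>i\<le>n. (w i * Bernstein n i t) *\<^sub>R p i)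
    = (\<Sum>k\<le>n+m. Bernstein (m+n) k t *\<^sub>R (\<Sum>j=k - n..min m k. (real (m choose j) * real (n choose (k - j)) / real ((m + n) choose k)
            * wc j * w (k - j)) *\<^sub>R p (k - j)))"
   and "(\<Sum>i\<le>n. w i * Bernstein n i t) *\<^sub>R (\<Sum>j\<le>m. (wc j * Bernstein m j t) *\<^sub>R pc j)
    = (\<Sum>k\<le>n+m. Bernstein (m+n) k t *\<^sub>R (\<Sum>j=k - n..min m k. (real (m choose j) * real (n choose (k - j)) / real ((m + n) choose k)
            * wc j * w (k - j)) *\<^sub>R pc j))"
proof -
  have "(\<Sum>j\<le>m. wc j * Bernstein m j t) *\<^sub>R (\<Sum>i\<le>n. (w i * Bernstein n i t) *\<^sub>R p i)
     = (\<Sum>i\<le>n. \<Sum>j\<le>m. (Bernstein (m+n) (i+j) t * (real (m choose j) * real (n choose i) / real ((m + n) choose (i+j))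
            * wc j * w i)) *\<^sub>R p i)"
    apply (simp add: scaleR_sum_right scaleR_sum_left sum_distrib_right)
    by (intro sum.cong refl) (simp add: term_eq)
  also have "\<dots> = (\<Sum>k\<le>n+m. \<Sum>j=k - n..min m k. (Bernstein (m+n) k t * (real (m choose j) * real (n choose (k-j)) / real ((m + n) choose k)
            * wc j * w (k-j))) *\<^sub>R p (k-j))"
    by (subst sum_reindex_conv) (intro sum.cong refl, simp add: kj)
  finally show "(\<Sum>j\<le>m. wc j * Bernstein m j t) *\<^sub>R (\<Sum>i\<le>n. (w i * Bernstein n i t) *\<^sub>R p i)
    = (\<Sum>k\<le>n+m. Bernstein (m+n) k t *\<^sub>R (\<Sum>j=k - n..min m k. (real (m choose j) * real (n choose (k - j)) / real ((m + n) choose k)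
            * wc j * w (k - j)) *\<^sub>R p (k - j)))"
    by (simp only: scaleR_sum_right scaleR_scaleR)
next
  have "(\<Sum>i\<le>n. w i * Bernstein n i t) *\<^sub>R (\<Sum>j\<le>m. (wc j * Bernstein m j t) *\<^sub>R pc j)
     = (\<Sum>i\<le>n. \<Sum>j\<le>m. (Bernstein (m+n) (i+j) t * (real (m choose j) * real (n choose i) / real ((m + n) choose (i+j))
            * wc j * w i)) *\<^sub>R pc j)"
  proof -
    have "(\<Sum>i\<le>n. w i * Bernstein n i t) *\<^sub>R (\<Sum>j\<le>m. (wc j * Bernstein m j t) *\<^sub>R pc j)
      = (\<Sum>j\<le>m. \<Sum>i\<le>n. ((wc j * Bernstein m j t) * (w i * Bernstein n i t)) *\<^sub>R pc j)"
    proof -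
      have "(\<Sum>i\<le>n. w i * Bernstein n i t) *\<^sub>R (\<Sum>j\<le>m. (wc j * Bernstein m j t) *\<^sub>R pc j)
         = (\<Sum>j\<le>m. (\<Sum>i\<le>n. w i * Bernstein n i t) *\<^sub>R ((wc j * Bernstein m j t) *\<^sub>R pc j))"
        by (simp only: scaleR_sum_right)
      also have "\<dots> = (\<Sum>j\<le>m. \<Sum>i\<le>n. (w i * Bernstein n i t) *\<^sub>R ((wc j * Bernstein m j t) *\<^sub>R pc j))"
        by (simp only: scaleR_sum_left)
      also have "\<dots> = (\<Sum>j\<le>m. \<Sum>i\<le>n. ((wc j * Bernstein m j t) * (w i * Bernstein n i t)) *\<^sub>R pc j)"
        by (intro sum.cong refl) (simp only: scaleR_scaleR mult.commute)
      finally show ?thesis .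
    qed
    also have "\<dots> = (\<Sum>i\<le>n. \<Sum>j\<le>m. ((wc j * Bernstein m j t) * (w i * Bernstein n i t)) *\<^sub>R pc j)"
      by (rule sum.swap)
    also have "\<dots> = (\<Sum>i\<le>n. \<Sum>j\<le>m. (Bernstein (m+n) (i+j) t * (real (m choose j) * real (n choose i) / real ((m + n) choose (i+j))
            * wc j * w i)) *\<^sub>R pc j)"
      by (intro sum.cong refl) (simp add: term_eq)
    finally show ?thesis .
  qed
  also have "\<dots> = (\<Sum>k\<le>n+m. \<Sum>j=k - n..min m k. (Bernstein (m+n) k t * (real (m choose j) * real (n choose (k-j)) / real ((m + n) choose k)
            * wc j * w (k-j))) *\<^sub>R pc j)"
    by (subst sum_reindex_conv) (intro sum.cong refl, simp add: kj)
  finally show "(\<Sum>i\<le>n. w i * Bernstein n i t) *\<^sub>R (\<Sum>j\<le>m. (wc j * Bernstein m j t) *\<^sub>R pc j)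
    = (\<Sum>k\<le>n+m. Bernstein (m+n) k t *\<^sub>R (\<Sum>j=k - n..min m k. (real (m choose j) * real (n choose (k - j)) / real ((m + n) choose k)
            * wc j * w (k - j)) *\<^sub>R pc j))"
    by (simp only: scaleR_sum_right scaleR_scaleR)
qed

lemma elev:
  assumes "m \<le> n"
  shows "bezier_radius m rc t = (\<Sum>k\<le>n. (\<Sum>j=k + m - n..min m k.
            rc j * real (m choose j) * real ((n - m) choose (k - j)) / real (n choose k)) * Bernstein n k t)"
proof -
  have "bezier_radius m rc t = (\<Sum>j\<le>m. rc j * Bernstein m j t * (\<Sum>l\<le>n-m. Bernstein (n-m) l t))"
    unfolding bezier_radius_def by simp
  also have "\<dots> = (\<Sum>j\<le>m. \<Sum>l\<le>n-m. rc j * real (m choose j) * real ((n - m) choose l) / real (n choose (l+j)) * Bernstein n (l+j) t)"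
  proof (intro sum.cong refl)
    fix j assume j: "j \<in> {..m}"
    have "rc j * Bernstein m j t * (\<Sum>l\<le>n-m. Bernstein (n-m) l t) = (\<Sum>l\<le>n-m. rc j * (Bernstein m j t * Bernstein (n-m) l t))"
      by (simp only: sum_distrib_left mult.assoc)
    also have "\<dots> = (\<Sum>l\<le>n-m. rc j * real (m choose j) * real ((n - m) choose l) / real (n choose (l+j)) * Bernstein n (l+j) t)"
    proof (intro sum.cong refl)
      fix l assume l: "l \<in> {..n-m}"
      have "Bernstein m j t * Bernstein (n-m) l t = real (m choose j) * real ((n-m) choose l) / real ((m+(n-m)) choose (j+l)) * Bernstein (m+(n-m)) (j+l) t"
        using j l by (intro bern_mult) auto
      also have "m + (n-m) = n" using assms by simp
      finally show "rc j * (Bernstein m j t * Bernstein (n-m) l t) = rc j * real (m choose j) * real ((n - m) choose l) / real (n choose (l+j)) * Bernstein n (l+j) t"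
        by (simp add: add.commute)
    qed
    finally show "rc j * Bernstein m j t * (\<Sum>l\<le>n-m. Bernstein (n-m) l t) = (\<Sum>l\<le>n-m. rc j * real (m choose j) * real ((n - m) choose l) / real (n choose (l+j)) * Bernstein n (l+j) t)" .
  qed
  also have "\<dots> = (\<Sum>l\<le>n-m. \<Sum>j\<le>m. rc j * real (m choose j) * real ((n - m) choose l) / real (n choose (l+j)) * Bernstein n (l+j) t)"
    by (rule sum.swap)
  also have "\<dots> = (\<Sum>k\<le>n-m+m. \<Sum>j=k-(n-m)..min m k. rc j * real (m choose j) * real ((n - m) choose (k-j)) / real (n choose k) * Bernstein n k t)"
    by (subst sum_reindex_conv) (intro sum.cong refl, simp add: kj)
  also have "\<dots> = (\<Sum>k\<le>n. (\<Sum>j=k + m - n..min m k.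
            rc j * real (m choose j) * real ((n - m) choose (k - j)) / real (n choose k)) * Bernstein n k t)"
  proof -
    have e: "\<And>k. k - (n-m) = k+m-n" using assms by simp
    have nm: "n-m+m = n" using assms by simp
    show ?thesis by (simp only: e nm sum_distrib_right)
  qed
  finally show ?thesis .
qed



theorem mainTheorem1:
  fixes n m :: nat
    and p :: "nat \<Rightarrow> real^2" and r w :: "nat \<Rightarrow> real"
    and pc :: "nat \<Rightarrow> real^2" and rc wc :: "nat \<Rightarrow> real"
  assumes "m < n"
    and "\<forall>i\<le>n. w i > 0" and "\<forall>i\<le>n. r i \<ge> 0"
    and "\<forall>j\<le>m. wc j > 0" and "\<forall>j\<le>m. rc j \<ge> 0"
  shows "(\<forall>t\<in>{0..1}. disk_rbezier n w p r t = disk_rbezier m wc pc rc t) \<longleftrightarrow>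
     ((\<forall>i\<le>n + m.
        (\<Sum>j=i - n..min m i. (real (m choose j) * real (n choose (i - j)) / real ((m + n) choose i)
            * wc j * w (i - j)) *\<^sub>R p (i - j)) =
        (\<Sum>j=i - n..min m i. (real (m choose j) * real (n choose (i - j)) / real ((m + n) choose i)
            * wc j * w (i - j)) *\<^sub>R pc j)) \<and>
      (\<forall>k\<le>n. r k = (\<Sum>j=k + m - n..min m k.
            rc j * real (m choose j) * real ((n - m) choose (k - j)) / real (n choose k))))"
proof -
  define A where "A k = (\<Sum>j=k - n..min m k. (real (m choose j) * real (n choose (k - j)) / real ((m + n) choose k)
            * wc j * w (k - j)) *\<^sub>R p (k - j))" for k
  define A' where "A' k = (\<Sum>j=k - n..min m k. (real (m choose j) * real (n choose (k - j)) / real ((m + n) choose k)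
            * wc j * w (k - j)) *\<^sub>R pc j)" for k
  define R where "R k = (\<Sum>j=k + m - n..min m k.
            rc j * real (m choose j) * real ((n - m) choose (k - j)) / real (n choose k))" for k
  have nm: "n + m = m + n" by simp
  have cen_t: "rbezier_center n w p t = rbezier_center m wc pc t \<longleftrightarrow>
      (\<Sum>k\<le>m+n. Bernstein (m+n) k t *\<^sub>R A k) = (\<Sum>k\<le>m+n. Bernstein (m+n) k t *\<^sub>R A' k)"
    if t: "t \<in> {0..1}" for t
  proof -
    have D: "(\<Sum>i\<le>n. w i * Bernstein n i t) \<noteq> 0" using denom_pos[OF assms(2) t] by simp
    have Dc: "(\<Sum>j\<le>m. wc j * Bernstein m j t) \<noteq> 0" using denom_pos[OF assms(4) t] by simp
    have "rbezier_center n w p t = rbezier_center m wc pc t \<longleftrightarrow>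
       (\<Sum>j\<le>m. wc j * Bernstein m j t) *\<^sub>R (\<Sum>i\<le>n. (w i * Bernstein n i t) *\<^sub>R p i)
       = (\<Sum>i\<le>n. w i * Bernstein n i t) *\<^sub>R (\<Sum>j\<le>m. (wc j * Bernstein m j t) *\<^sub>R pc j)"
      unfolding rbezier_center_def by (rule divR_eq[OF D Dc])
    also have "\<dots> \<longleftrightarrow> (\<Sum>k\<le>n+m. Bernstein (m+n) k t *\<^sub>R A k) = (\<Sum>k\<le>n+m. Bernstein (m+n) k t *\<^sub>R A' k)"
      unfolding A_def A'_def cross(1)[where p=p and wc=wc and w=w] cross(2)[where pc=pc and wc=wc and w=w] ..
    finally show ?thesis unfolding nm .
  qed
  have cen: "(\<forall>t\<in>{0..1}. rbezier_center n w p t = rbezier_center m wc pc t) \<longleftrightarrow> (\<forall>k\<le>n+m. A k = A' k)"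
    using cen_t bern_indep_vec[where N="m+n" and a=A and b=A'] unfolding nm by simp
  have rad: "(\<forall>t\<in>{0..1}. bezier_radius n r t = bezier_radius m rc t) \<longleftrightarrow> (\<forall>k\<le>n. r k = R k)"
  proof -
    have "bezier_radius m rc t = (\<Sum>k\<le>n. R k * Bernstein n k t)" for t
      unfolding R_def using assms(1) by (intro elev) simp
    then show ?thesis unfolding bezier_radius_def using bern_indep[where N=n and a=r and b=R] by simp
  qed
  have disk: "disk_rbezier n w p r t = disk_rbezier m wc pc rc t \<longleftrightarrow>
      rbezier_center n w p t = rbezier_center m wc pc t \<and> bezier_radius n r t = bezier_radius m rc t"
    if t: "t \<in> {0..1}" for t
    unfolding disk_rbezier_def cball_eq_cball_iff
    using radius_nonneg[OF assms(3) t] by auto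
  have "(\<forall>t\<in>{0..1}. disk_rbezier n w p r t = disk_rbezier m wc pc rc t) \<longleftrightarrow>
     (\<forall>t\<in>{0..1}. rbezier_center n w p t = rbezier_center m wc pc t) \<and>
     (\<forall>t\<in>{0..1}. bezier_radius n r t = bezier_radius m rc t)"
    using disk by blast
  also have "\<dots> \<longleftrightarrow> (\<forall>k\<le>n+m. A k = A' k) \<and> (\<forall>k\<le>n. r k = R k)"
    using cen rad by simp
  finally show ?thesis unfolding A_def A'_def R_def .
qed

end
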